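(* Let $q=p^{m_0}$ with $p$ prime, let $R$ be a commutative ring of characteristic $p$, and let $\rho$ be a permutation of $\{0,1,2,\ldots\}$. The $R$-linear map $\rho_\ast:R\{\{u\}\}\to R\{\{u\}\}$ defined by $$\rho_\ast\Big(\sum_{i\ge0}a_i\frac{u^i}{i!}\Big):=\sum_{i\ge0}a_i\frac{u^{\rho_\ast i}}{(\rho_\ast i)!}$$ is an $R$-algebra automorphism of $R\{\{u\}\}$.
   Context: For a nonnegative integer $i=\sum_j c_jq^j$ ($0\le c_j<q$), $\rho_\ast i:=\sum_j c_jq^{\rho(j)}$; $i\mapsto\rho_\ast i$ is a bijection of the nonnegative integers. $R\{\{u\}\}$ is the $R$-algebra of formal divided power series $\sum_{i\ge0}a_i\frac{u^i}{i!}$ ($a_i\in R$), where $\frac{u^i}{i!}$ are formal symbols, addition is coefficientwise, and multiplication is determined by $\frac{u^i}{i!}\cdot\frac{u^j}{j!}=\binom{i+j}{i}\frac{u^{i+j}}{(i+j)!}$. *)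

theory Defs
  imports "HOL-Computational_Algebra.Primes"
begin

text \<open>Divided power series R{{u}}: a series sum a_i u^i/i! is represented by its
coefficient function a :: nat => R.\<close>

definition dps_add :: "(nat \<Rightarrow> 'a::comm_ring_1) \<Rightarrow> (nat \<Rightarrow> 'a) \<Rightarrow> (nat \<Rightarrow> 'a)" where
  "dps_add a b = (\<lambda>n. a n + b n)"

definition dps_smult :: "'a::comm_ring_1 \<Rightarrow> (nat \<Rightarrow> 'a) \<Rightarrow> (nat \<Rightarrow> 'a)" where
  "dps_smult c a = (\<lambda>n. c * a n)"

text \<open>Multiplication determined by u^i/i! * u^j/j! = binom(i+j,i) u^(i+j)/(i+j)!.\<close>
definition dps_mult :: "(nat \<Rightarrow> 'a::comm_ring_1) \<Rightarrow> (nat \<Rightarrow> 'a) \<Rightarrow> (nat \<Rightarrow> 'a)" where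
  "dps_mult a b = (\<lambda>n. \<Sum>i\<le>n. of_nat (n choose i) * a i * b (n - i))"

definition dps_one :: "nat \<Rightarrow> 'a::comm_ring_1" where
  "dps_one = (\<lambda>n. if n = 0 then 1 else 0)"

text \<open>rho_* on nonnegative integers: permute the base-q digit positions.
  Digits at positions j > i of i vanish (q >= 2), so summing over j <= i suffices.\<close>
definition rho_nat :: "nat \<Rightarrow> (nat \<Rightarrow> nat) \<Rightarrow> nat \<Rightarrow> nat" where
  "rho_nat q \<rho> i = (\<Sum>j\<le>i. ((i div q ^ j) mod q) * q ^ (\<rho> j))"

text \<open>rho_* on divided power series: the coefficient a_i is moved to position rho_* i,
  i.e. the new coefficient at position k is a_(rho_*^{-1} k).\<close>
definition rho_dps :: "nat \<Rightarrow> (nat \<Rightarrow> nat) \<Rightarrow> (nat \<Rightarrow> 'a::comm_ring_1) \<Rightarrow> (nat \<Rightarrow> 'a)" where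
  "rho_dps q \<rho> a = (\<lambda>k. a (inv (rho_nat q \<rho>) k))"

definition is_dps_alg_aut :: "((nat \<Rightarrow> 'a::comm_ring_1) \<Rightarrow> (nat \<Rightarrow> 'a)) \<Rightarrow> bool" where
  "is_dps_alg_aut f \<longleftrightarrow>
     bij f \<and>
     (\<forall>a b. f (dps_add a b) = dps_add (f a) (f b)) \<and>
     (\<forall>c a. f (dps_smult c a) = dps_smult c (f a)) \<and>
     (\<forall>a b. f (dps_mult a b) = dps_mult (f a) (f b)) \<and>
     f dps_one = dps_one"

end

theory Submission imports Defs begin

definition dg :: "nat \<Rightarrow> nat \<Rightarrow> nat \<Rightarrow> nat" where
  "dg q j x = x div q ^ j mod q"

lemma dg0: "dg q 0 x = x mod q" by (simp add: dg_def)
lemma dgSuc: "dg q (Suc j) x = dg q j (x div q)"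
  by (simp add: dg_def div_mult2_eq mult.commute)

context fixes q :: nat assumes q2: "2 \<le> q" begin

lemma lt_pow_self: "x < q ^ x"
proof -
  have "x < 2 ^ x" by (rule less_exp)
  also have "\<dots> \<le> q ^ x" using q2 by (simp add: power_mono)
  finally show ?thesis .
qed

lemma dg_large: "x < q ^ j \<Longrightarrow> dg q j x = 0"
  by (simp add: dg_def)

lemma dg_nz: "dg q l x \<noteq> 0 \<Longrightarrow> l \<le> x"
proof (rule ccontr)
  assume "dg q l x \<noteq> 0" "\<not> l \<le> x"
  then have "q ^ x \<le> q ^ l" using q2 by (intro power_increasing) auto
  then have "x < q ^ l" using lt_pow_self[of x] by linarith
  then show False using \<open>dg q l x \<noteq> 0\<close> dg_large[of x l] by simp
qed

lemma digits_eq_aux: "x < q ^ N \<Longrightarrow> y < q ^ N \<Longrightarrow> (\<forall>j. dg q j x = dg q j y) \<Longrightarrow> x = y"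
proof (induction N arbitrary: x y)
  case 0 then show ?case by simp
next
  case (Suc N)
  have m: "x mod q = y mod q" using Suc.prems(3) by (metis dg0)
  have "x div q < q ^ N" "y div q < q ^ N" using Suc.prems(1,2) q2
    by (auto simp: less_mult_imp_div_less mult.commute)
  moreover have "\<forall>j. dg q j (x div q) = dg q j (y div q)" using Suc.prems(3) by (metis dgSuc)
  ultimately have "x div q = y div q" using Suc.IH by blast
  then show ?case using m by (metis div_mult_mod_eq)
qed

lemma digits_eq: "(\<And>j. dg q j x = dg q j y) \<Longrightarrow> x = y"
  using digits_eq_aux[of x "x + y" y] lt_pow_self[of "x+y"]
  by (meson le_add1 le_add2 le_less_trans)

lemma dg_sum: "(\<And>l. c l < q) \<Longrightarrow> (\<And>l. N \<le> l \<Longrightarrow> c l = 0) \<Longrightarrow>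
   dg q l (\<Sum>l'<N. c l' * q ^ l') = c l"
proof (induction N arbitrary: c l)
  case 0 then show ?case by (simp add: dg_def)
next
  case (Suc N)
  define s where "s = (\<Sum>l'<N. c (Suc l') * q ^ l')"
  have eq: "(\<Sum>l'<Suc N. c l' * q ^ l') = c 0 + q * s"
    unfolding s_def sum.lessThan_Suc_shift by (simp add: sum_distrib_left mult.left_commute)
  have c0: "c 0 < q" by (rule Suc.prems(1))
  have md: "(c 0 + q * s) mod q = c 0" "(c 0 + q * s) div q = s" using c0 q2 by auto
  show ?case
  proof (cases l)
    case 0 then show ?thesis using md c0 by (simp only: eq dg0)
  next
    case (Suc l')
    have "dg q l' s = c (Suc l')"
      unfolding s_def by (rule Suc.IH) (use Suc.prems in auto)
    then show ?thesis by (simp only: Suc eq dgSuc md(2))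
  qed
qed

definition dle :: "nat \<Rightarrow> nat \<Rightarrow> bool" where
  "dle x y \<longleftrightarrow> (\<forall>l. dg q l x \<le> dg q l y)"

lemma dle_div: "dle x y \<Longrightarrow> dle (x div q) (y div q)"
  unfolding dle_def by (metis dgSuc)

lemma dle_le: "dle x y \<Longrightarrow> x \<le> y"
proof (induction y arbitrary: x rule: less_induct)
  case (less y)
  show ?case
  proof (cases "y = 0")
    case True
    then have "\<forall>l. dg q l x = dg q l 0" using less.prems unfolding dle_def by (auto simp: dg_def)
    then have "x = 0" using digits_eq[of x 0] by blast
    then show ?thesis by simp
  next
    case False
    then have "y div q < y" using q2 by simp
    then have "x div q \<le> y div q" using less.IH dle_div less.prems by blast
    then have a: "q * (x div q) \<le> q * (y div q)" by (rule mult_le_mono2)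
    have b: "x mod q \<le> y mod q" using less.prems unfolding dle_def by (metis dg0)
    show ?thesis using a b mult_div_mod_eq[of q x] mult_div_mod_eq[of q y] by linarith
  qed
qed

lemma ar: "(b::nat) \<le> a \<Longrightarrow> s \<le> r \<Longrightarrow> (q*a + r) - (q*b + s) = q*(a-b) + (r-s)"
proof -
  assume "b \<le> a" "s \<le> r"
  then obtain c t where "a = b + c" "r = s + t" by (metis le_Suc_ex)
  then show ?thesis by (simp add: distrib_left)
qed

lemma sub_div_mod:
  assumes "dle j n"
  shows "(n - j) div q = n div q - j div q" "(n - j) mod q = n mod q - j mod q"
proof -
  have s: "j mod q \<le> n mod q" using assms unfolding dle_def by (metis dg0)
  have b: "j div q \<le> n div q" using dle_le[OF dle_div[OF assms]] .
  have e: "n - j = q * (n div q - j div q) + (n mod q - j mod q)"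
    using ar[OF b s] by (simp only: mult_div_mod_eq)
  have lt: "n mod q - j mod q < q" using mod_less_divisor[of q n] q2 by linarith
  have dm: "(q*X+Y) div q = X \<and> (q*X+Y) mod q = Y" if "Y < q" for X Y using q2 that by simp
  show "(n - j) div q = n div q - j div q" unfolding e using dm[OF lt, of "n div q - j div q"] by blast
  show "(n - j) mod q = n mod q - j mod q" unfolding e using dm[OF lt, of "n div q - j div q"] by blast
qed

lemma dg_sub: "dle j n \<Longrightarrow> dg q l (n - j) = dg q l n - dg q l j"
proof (induction l arbitrary: n j)
  case 0 then show ?case by (simp only: dg0 sub_div_mod(2)[OF 0])
next
  case (Suc l)
  have "dg q l (n div q - j div q) = dg q l (n div q) - dg q l (j div q)"
    by (rule Suc.IH[OF dle_div[OF Suc.prems]])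
  then show ?case by (simp only: dgSuc sub_div_mod(1)[OF Suc.prems])
qed

end

context fixes q :: nat and \<rho> :: "nat \<Rightarrow> nat" assumes q2: "2 \<le> q" and bj: "bij \<rho>" begin

lemma rho_inv1: "\<rho> (inv \<rho> l) = l" using bj by (simp add: bij_is_surj surj_f_inv_f)
lemma rho_inv2: "inv \<rho> (\<rho> j) = j" using bj by (simp add: bij_is_inj)

lemma rho_nat_alt: "rho_nat q \<rho> n = (\<Sum>l<Suc (Max (\<rho> ` {..n})). dg q (inv \<rho> l) n * q ^ l)"
proof -
  have "rho_nat q \<rho> n = (\<Sum>j\<le>n. dg q j n * q ^ \<rho> j)" unfolding rho_nat_def dg_def by simp
  also have "\<dots> = (\<Sum>l\<in>\<rho> ` {..n}. dg q (inv \<rho> l) n * q ^ l)"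
    by (simp add: sum.reindex[OF inj_on_subset[OF bij_is_inj[OF bj]]] rho_inv2)
  also have "\<dots> = (\<Sum>l<Suc (Max (\<rho> ` {..n})). dg q (inv \<rho> l) n * q ^ l)"
  proof (rule sum.mono_neutral_left)
    show "\<rho> ` {..n} \<subseteq> {..<Suc (Max (\<rho> ` {..n}))}" by (auto simp: le_imp_less_Suc)
    show "\<forall>i\<in>{..<Suc (Max (\<rho> ` {..n}))} - \<rho> ` {..n}. dg q (inv \<rho> i) n * q ^ i = 0"
    proof
      fix l assume "l \<in> {..<Suc (Max (\<rho> ` {..n}))} - \<rho> ` {..n}"
      then have "inv \<rho> l \<notin> {..n}" using rho_inv1 by (metis DiffD2 image_eqI)
      then have "dg q (inv \<rho> l) n = 0" using dg_nz[OF q2] by fastforce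
      then show "dg q (inv \<rho> l) n * q ^ l = 0" by simp
    qed
  qed simp
  finally show ?thesis .
qed

lemma dg_rho: "dg q l (rho_nat q \<rho> n) = dg q (inv \<rho> l) n"
  unfolding rho_nat_alt
proof (rule dg_sum[OF q2])
  fix l show "dg q (inv \<rho> l) n < q" using q2 by (simp add: dg_def)
next
  fix l assume "Suc (Max (\<rho> ` {..n})) \<le> l"
  then have "l \<notin> \<rho> ` {..n}" by (metis Max_ge finite_atMost finite_imageI not_less_eq_eq)
  then have "inv \<rho> l \<notin> {..n}" using rho_inv1 by (metis image_eqI)
  then show "dg q (inv \<rho> l) n = 0" using dg_nz[OF q2] by fastforce
qed

lemma dg_rho': "dg q (\<rho> j) (rho_nat q \<rho> n) = dg q j n"
  by (simp add: dg_rho rho_inv2)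

lemma rho_inj: "inj (rho_nat q \<rho>)"
proof (rule injI)
  fix x y assume "rho_nat q \<rho> x = rho_nat q \<rho> y"
  then have "dg q j x = dg q j y" for j by (metis dg_rho')
  then show "x = y" using digits_eq[OF q2] by blast
qed

lemma rho_surj: "surj (rho_nat q \<rho>)"
proof -
  have "k \<in> range (rho_nat q \<rho>)" for k
  proof -
    define N where "N = Suc (Max (inv \<rho> ` {..k}))"
    define n where "n = (\<Sum>j<N. dg q (\<rho> j) k * q ^ j)"
    have dn: "dg q j n = dg q (\<rho> j) k" for j
      unfolding n_def
    proof (rule dg_sum[OF q2])
      fix l show "dg q (\<rho> l) k < q" using q2 by (simp add: dg_def)
    next
      fix l assume "N \<le> l"
      then have "l \<notin> inv \<rho> ` {..k}" unfolding N_def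
        by (metis Max_ge finite_atMost finite_imageI not_less_eq_eq)
      then have "\<rho> l \<notin> {..k}" using rho_inv2 by (metis image_eqI)
      then show "dg q (\<rho> l) k = 0" using dg_nz[OF q2] by fastforce
    qed
    have "rho_nat q \<rho> n = k"
      by (rule digits_eq[OF q2]) (simp add: dg_rho dn rho_inv1)
    then show ?thesis by blast
  qed
  then show ?thesis by blast
qed

lemma rho_bij: "bij (rho_nat q \<rho>)" using rho_inj rho_surj by (simp add: bij_def)

lemma rho_dle: "dle q (rho_nat q \<rho> i) (rho_nat q \<rho> n) \<longleftrightarrow> dle q i n"
proof -
  have "(\<forall>l. dg q l (rho_nat q \<rho> i) \<le> dg q l (rho_nat q \<rho> n)) \<longleftrightarrow> (\<forall>l. dg q l i \<le> dg q l n)"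
  proof
    assume H: "\<forall>l. dg q l (rho_nat q \<rho> i) \<le> dg q l (rho_nat q \<rho> n)"
    show "\<forall>l. dg q l i \<le> dg q l n"
    proof
      fix l
      from H have "dg q (\<rho> l) (rho_nat q \<rho> i) \<le> dg q (\<rho> l) (rho_nat q \<rho> n)" by blast
      then show "dg q l i \<le> dg q l n" by (simp only: dg_rho')
    qed
  next
    assume H: "\<forall>l. dg q l i \<le> dg q l n"
    show "\<forall>l. dg q l (rho_nat q \<rho> i) \<le> dg q l (rho_nat q \<rho> n)"
    proof
      fix l
      from H have "dg q (inv \<rho> l) i \<le> dg q (inv \<rho> l) n" by blast
      then show "dg q l (rho_nat q \<rho> i) \<le> dg q l (rho_nat q \<rho> n)" by (simp only: dg_rho)
    qed
  qed
  then show ?thesis unfolding dle_def[OF q2] .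
qed

lemma rho_sub: assumes "dle q j n" shows "rho_nat q \<rho> (n - j) = rho_nat q \<rho> n - rho_nat q \<rho> j"
proof (rule digits_eq[OF q2])
  fix l
  have d: "dle q (rho_nat q \<rho> j) (rho_nat q \<rho> n)" using assms rho_dle by blast
  show "dg q l (rho_nat q \<rho> (n - j)) = dg q l (rho_nat q \<rho> n - rho_nat q \<rho> j)"
    unfolding dg_sub[OF q2 d] dg_rho dg_sub[OF q2 assms] ..
qed

lemma rho_zero: "rho_nat q \<rho> 0 = 0" by (simp add: rho_nat_def)

end
context fixes p :: nat assumes pp: "prime p" and ch: "CHAR('a::comm_ring_1) = p" begin

lemma chooseP_zero: "r \<noteq> 0 \<Longrightarrow> r \<noteq> p \<Longrightarrow> (of_nat (p choose r) :: 'a) = 0"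
proof -
  assume r: "r \<noteq> 0" "r \<noteq> p"
  show ?thesis
  proof (cases "r < p")
    case True
    then have "p dvd (p choose r)" using dvd_choose_prime[OF True r(1) _ pp] pp by auto
    then show ?thesis using of_nat_eq_0_iff_char_dvd[where 'a='a] ch by simp
  next
    case False
    then have "p < r" using r by simp
    then show ?thesis by (simp add: binomial_eq_0)
  qed
qed

lemma stepA: "(of_nat (p * a choose k) :: 'a) = (if p dvd k then of_nat (a choose (k div p)) else 0)"
proof (induction a arbitrary: k)
  case 0
  have "p > 0" using pp prime_gt_0_nat by blast
  show ?case
  proof (cases "k = 0")
    case True then show ?thesis by simp
  next
    case False
    then have "p dvd k \<Longrightarrow> k div p \<noteq> 0" using \<open>p > 0\<close> by (auto elim!: dvdE)
    then show ?thesis using False by (simp add: binomial_eq_0)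
  qed
next
  case (Suc a)
  have p0: "p > 0" using pp prime_gt_0_nat by blast
  define t where "t j = (of_nat (p * a choose j) :: 'a) * of_nat (p choose (k - j))" for j
  have "(of_nat (p * Suc a choose k) :: 'a) = (\<Sum>j\<le>k. t j)"
    unfolding t_def of_nat_mult[symmetric] of_nat_sum[symmetric]
    using vandermonde[of "p*a" p k] by (simp add: add.commute)
  also have "\<dots> = (\<Sum>j\<in>{k} \<union> (if p \<le> k then {k - p} else {}). t j)"
  proof (rule sum.mono_neutral_right)
    show "{k} \<union> (if p \<le> k then {k - p} else {}) \<subseteq> {..k}" by auto
    show "\<forall>j\<in>{..k} - ({k} \<union> (if p \<le> k then {k - p} else {})). t j = 0"
    proof
      fix j assume "j \<in> {..k} - ({k} \<union> (if p \<le> k then {k - p} else {}))"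
      then have "k - j \<noteq> 0" "k - j \<noteq> p" by (auto split: if_splits)
      then show "t j = 0" unfolding t_def using chooseP_zero by simp
    qed
  qed simp
  also have "\<dots> = of_nat (p * a choose k) + (if p \<le> k then of_nat (p * a choose (k - p)) else 0)"
    using p0 by (auto simp: t_def)
  also have "\<dots> = (if p dvd k then of_nat (Suc a choose (k div p)) else 0)"
  proof (cases "p dvd k")
    case True
    then obtain c where c: "k = p * c" by (elim dvdE)
    show ?thesis
    proof (cases c)
      case 0 then show ?thesis using c p0 Suc.IH by simp
    next
      case (Suc c')
      have "k - p = p * c'" using c Suc by (simp add: algebra_simps)
      moreover have "p \<le> k" using c Suc by simp
      ultimately show ?thesis using c Suc p0 Suc.IH by simp
    qed
  next
    case False
    have "p \<le> k \<Longrightarrow> \<not> p dvd (k - p)"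
      using False by (metis dvd_diff_nat dvd_refl le_add_diff_inverse2 dvd_add)
    then show ?thesis using False Suc.IH by auto
  qed
  finally show ?case .
qed

lemma lucas_p: "(of_nat (n choose i) :: 'a) =
   of_nat (n div p choose i div p) * of_nat (n mod p choose i mod p)"
proof -
  have p0: "p > 0" using pp prime_gt_0_nat by blast
  define a r where "a = n div p" and "r = n mod p"
  have n: "n = p * a + r" unfolding a_def r_def by simp
  have rp: "r < p" unfolding r_def using p0 by simp
  define t where "t j = (of_nat (p * a choose j) :: 'a) * of_nat (r choose (i - j))" for j
  define j0 where "j0 = p * (i div p)"
  have "(of_nat (n choose i) :: 'a) = (\<Sum>j\<le>i. t j)"
    unfolding t_def of_nat_mult[symmetric] of_nat_sum[symmetric]
    using vandermonde[of "p*a" r i] n by simp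
  also have "\<dots> = (\<Sum>j\<in>{j0}. t j)"
  proof (rule sum.mono_neutral_right)
    show "{j0} \<subseteq> {..i}" unfolding j0_def by (simp add: mult.commute)
    show "\<forall>j\<in>{..i} - {j0}. t j = 0"
    proof
      fix j assume j: "j \<in> {..i} - {j0}"
      show "t j = 0"
      proof (cases "p dvd j \<and> i - j \<le> r")
        case True
        then obtain c where c: "j = p * c" by (auto elim!: dvdE)
        have "p * c \<le> i" "i < p * c + p" using True j c rp by auto
        then have "i div p = c" using p0
          by (metis add.commute div_nat_eqI mult.commute mult_Suc_right)
        then show ?thesis using j c unfolding j0_def by simp
      next
        case False
        then show ?thesis unfolding t_def using stepA by (auto simp: binomial_eq_0 not_le)
      qed
    qed
  qed simp
  also have "\<dots> = of_nat (a choose (i div p)) * of_nat (r choose (i mod p))"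
    unfolding t_def j0_def using stepA p0 by (simp add: minus_mult_div_eq_mod)
  finally show ?thesis unfolding a_def r_def .
qed

lemma lucas_pow: "(of_nat (n choose i) :: 'a) =
   of_nat (n div p ^ m choose i div p ^ m) * of_nat (n mod p ^ m choose i mod p ^ m)"
proof (induction m arbitrary: n i)
  case 0 then show ?case by simp
next
  case (Suc m)
  define Q where "Q = p ^ m"
  have pQ: "p ^ Suc m = p * Q" unfolding Q_def by simp
  have p0: "p > 0" using pp prime_gt_0_nat by blast
  have e1: "(of_nat (n choose i) :: 'a) = of_nat (n div p choose i div p) * of_nat (n mod p choose i mod p)"
    by (rule lucas_p)
  have e2: "(of_nat (n div p choose i div p) :: 'a) =
      of_nat (n div p div Q choose i div p div Q) * of_nat (n div p mod Q choose i div p mod Q)"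
    unfolding Q_def by (rule Suc.IH)
  have e3: "(of_nat (n mod (p * Q) choose i mod (p * Q)) :: 'a) =
      of_nat (n mod (p*Q) div p choose i mod (p*Q) div p) * of_nat (n mod (p*Q) mod p choose i mod (p*Q) mod p)"
    by (rule lucas_p)
  have m1: "x mod (p * Q) div p = x div p mod Q" for x using p0 by (simp add: mod_mult2_eq div_mult2_eq)
  have m2: "x mod (p * Q) mod p = x mod p" for x by (simp add: mod_mod_cancel)
  have m3: "x div (p * Q) = x div p div Q" for x by (simp add: div_mult2_eq)
  show ?case unfolding pQ e3 m1 m2 m3 e1 e2 by (simp add: ac_simps)
qed

end

lemma lucas_q:
  fixes p q :: nat
  assumes pp: "prime p" and ch: "CHAR('a::comm_ring_1) = p" and qd: "q = p ^ m"
  shows "(of_nat (n choose i) :: 'a) = of_nat (n div q choose i div q) * of_nat (n mod q choose i mod q)"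
  unfolding qd by (rule lucas_pow[OF pp ch])

context
  fixes p q m :: nat and \<rho> :: "nat \<Rightarrow> nat"
  assumes pp: "prime p" and ch: "CHAR('a::comm_ring_1) = p" and qd: "q = p ^ m"
    and q2: "2 \<le> q" and bj: "bij \<rho>"
begin

lemma lucas_N: "n < q ^ N \<Longrightarrow> i < q ^ N \<Longrightarrow>
  (of_nat (n choose i) :: 'a) = (\<Prod>l<N. of_nat (dg q l n choose dg q l i))"
proof (induction N arbitrary: n i)
  case 0 then show ?case by simp
next
  case (Suc N)
  have "n div q < q ^ N" "i div q < q ^ N" using Suc.prems q2
    by (auto simp: less_mult_imp_div_less mult.commute)
  then have ih: "(of_nat (n div q choose i div q) :: 'a) = (\<Prod>l<N. of_nat (dg q l (n div q) choose dg q l (i div q)))"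
    using Suc.IH by blast
  have "(\<Prod>l<Suc N. (of_nat (dg q l n choose dg q l i) :: 'a)) =
     of_nat (dg q 0 n choose dg q 0 i) * (\<Prod>l<N. of_nat (dg q (Suc l) n choose dg q (Suc l) i))"
    by (rule prod.lessThan_Suc_shift)
  also have "\<dots> = of_nat (n mod q choose i mod q) * of_nat (n div q choose i div q)"
    unfolding dg0 dgSuc ih ..
  also have "\<dots> = (of_nat (n choose i) :: 'a)"
    using lucas_q[OF pp ch qd, of n i] by (simp add: ac_simps)
  finally show ?case ..
qed

definition FF :: "nat \<Rightarrow> nat \<Rightarrow> nat set" where
  "FF n i = {l. dg q l n \<noteq> 0 \<or> dg q l i \<noteq> 0}"

lemma FF_sub: "FF n i \<subseteq> {..<Suc (n + i)}"
proof
  fix l assume "l \<in> FF n i"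
  then have "dg q l n \<noteq> 0 \<or> dg q l i \<noteq> 0" unfolding FF_def by simp
  then have "l \<le> n \<or> l \<le> i" using dg_nz[OF q2] by blast
  then show "l \<in> {..<Suc (n + i)}" by auto
qed

lemma FF_fin: "finite (FF n i)" by (rule finite_subset[OF FF_sub]) simp

lemma lucas_F: "(of_nat (n choose i) :: 'a) = (\<Prod>l\<in>FF n i. of_nat (dg q l n choose dg q l i))"
proof -
  define N where "N = Suc (n + i)"
  have "1 \<le> q" using q2 by simp
  have "q ^ n \<le> q ^ N" by (rule power_increasing) (use q2 in \<open>simp_all add: N_def\<close>)
  moreover have "q ^ i \<le> q ^ N" by (rule power_increasing) (use q2 in \<open>simp_all add: N_def\<close>)
  ultimately have "n < q ^ N" "i < q ^ N" using lt_pow_self[OF q2, of n] lt_pow_self[OF q2, of i] by linarith+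
  then have "(of_nat (n choose i) :: 'a) = (\<Prod>l<N. of_nat (dg q l n choose dg q l i))"
    by (rule lucas_N)
  also have "\<dots> = (\<Prod>l\<in>FF n i. of_nat (dg q l n choose dg q l i))"
  proof (rule prod.mono_neutral_right)
    show "FF n i \<subseteq> {..<N}" unfolding N_def by (rule FF_sub)
    show "\<forall>l\<in>{..<N} - FF n i. (of_nat (dg q l n choose dg q l i) :: 'a) = 1"
      unfolding FF_def by auto
  qed simp
  finally show ?thesis .
qed

lemma lucas_zero: "\<not> dle q i n \<Longrightarrow> (of_nat (n choose i) :: 'a) = 0"
proof -
  assume "\<not> dle q i n"
  then obtain l where l: "dg q l n < dg q l i" unfolding dle_def[OF q2] by (auto simp: not_le)
  then have "l \<in> FF n i" unfolding FF_def by auto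
  moreover have "(of_nat (dg q l n choose dg q l i) :: 'a) = 0" using l by (simp add: binomial_eq_0)
  ultimately have "\<exists>l\<in>FF n i. (of_nat (dg q l n choose dg q l i) :: 'a) = 0" by blast
  then show ?thesis by (subst lucas_F[of n i]) (rule prod_zero[OF FF_fin])
qed

lemma FF_rho: "FF (rho_nat q \<rho> n) (rho_nat q \<rho> i) = \<rho> ` FF n i"
proof (rule set_eqI)
  fix l
  have "l \<in> FF (rho_nat q \<rho> n) (rho_nat q \<rho> i) \<longleftrightarrow> inv \<rho> l \<in> FF n i"
    unfolding FF_def by (simp add: dg_rho[OF q2 bj])
  also have "\<dots> \<longleftrightarrow> l \<in> \<rho> ` FF n i"
  proof
    assume "inv \<rho> l \<in> FF n i"
    then have "\<rho> (inv \<rho> l) \<in> \<rho> ` FF n i" by (rule imageI)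
    then show "l \<in> \<rho> ` FF n i" by (simp only: rho_inv1[OF q2 bj])
  next
    assume "l \<in> \<rho> ` FF n i"
    then obtain j where "j \<in> FF n i" "l = \<rho> j" by blast
    then show "inv \<rho> l \<in> FF n i" by (simp only: rho_inv2[OF q2 bj])
  qed
  finally show "l \<in> FF (rho_nat q \<rho> n) (rho_nat q \<rho> i) \<longleftrightarrow> l \<in> \<rho> ` FF n i" .
qed

lemma lucas_rho: "(of_nat (rho_nat q \<rho> n choose rho_nat q \<rho> i) :: 'a) = of_nat (n choose i)"
proof -
  have "(of_nat (rho_nat q \<rho> n choose rho_nat q \<rho> i) :: 'a) =
     (\<Prod>l\<in>\<rho> ` FF n i. of_nat (dg q l (rho_nat q \<rho> n) choose dg q l (rho_nat q \<rho> i)))"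
    by (subst lucas_F[of "rho_nat q \<rho> n" "rho_nat q \<rho> i"]) (simp only: FF_rho)
  also have "\<dots> = (\<Prod>l\<in>FF n i. of_nat (dg q (\<rho> l) (rho_nat q \<rho> n) choose dg q (\<rho> l) (rho_nat q \<rho> i)))"
    by (rule prod.reindex[OF inj_on_subset[OF bij_is_inj[OF bj]], simplified])
  also have "\<dots> = (of_nat (n choose i) :: 'a)"
    unfolding dg_rho'[OF q2 bj] by (rule lucas_F[of n i, symmetric])
  finally show ?thesis .
qed

lemma mult_key:
  fixes a b :: "nat \<Rightarrow> 'a"
  defines "\<tau> \<equiv> inv (rho_nat q \<rho>)"
  shows "(\<Sum>i\<le>n. of_nat (n choose i) * a i * b (n - i)) =
    (\<Sum>i\<le>rho_nat q \<rho> n. of_nat (rho_nat q \<rho> n choose i) * a (\<tau> i) * b (\<tau> (rho_nat q \<rho> n - i)))"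
proof -
  let ?s = "rho_nat q \<rho>"
  have ts: "\<tau> (?s x) = x" for x unfolding \<tau>_def by (rule inv_f_f[OF rho_inj[OF q2 bj]])
  have st: "?s (\<tau> x) = x" for x unfolding \<tau>_def by (rule surj_f_inv_f[OF rho_surj[OF q2 bj]])
  define S where "S = {i. dle q i n}"
  have Ssub: "S \<subseteq> {..n}" unfolding S_def using dle_le[OF q2] by auto
  have "(\<Sum>i\<le>n. of_nat (n choose i) * a i * b (n - i)) = (\<Sum>i\<in>S. of_nat (n choose i) * a i * b (n - i))"
  proof (rule sum.mono_neutral_right)
    show "\<forall>i\<in>{..n} - S. (of_nat (n choose i) :: 'a) * a i * b (n - i) = 0"
      unfolding S_def using lucas_zero by auto
  qed (use Ssub in auto)
  also have "\<dots> = (\<Sum>j\<in>S. of_nat (?s n choose ?s j) * a (\<tau> (?s j)) * b (\<tau> (?s n - ?s j)))"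
  proof (rule sum.cong)
    fix j assume "j \<in> S"
    then have "dle q j n" unfolding S_def by simp
    then show "(of_nat (n choose j) :: 'a) * a j * b (n - j) = of_nat (?s n choose ?s j) * a (\<tau> (?s j)) * b (\<tau> (?s n - ?s j))"
      by (simp add: lucas_rho ts rho_sub[OF q2 bj, symmetric])
  qed simp
  also have "\<dots> = (\<Sum>i\<in>?s ` S. of_nat (?s n choose i) * a (\<tau> i) * b (\<tau> (?s n - i)))"
    by (rule sum.reindex[OF inj_on_subset[OF rho_inj[OF q2 bj]], simplified, symmetric])
  also have "\<dots> = (\<Sum>i\<le>?s n. of_nat (?s n choose i) * a (\<tau> i) * b (\<tau> (?s n - i)))"
  proof (rule sum.mono_neutral_left)
    show "?s ` S \<subseteq> {..?s n}"
      unfolding S_def using rho_dle[OF q2 bj] dle_le[OF q2] by auto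
    show "\<forall>i\<in>{..?s n} - ?s ` S. (of_nat (?s n choose i) :: 'a) * a (\<tau> i) * b (\<tau> (?s n - i)) = 0"
    proof
      fix i assume i: "i \<in> {..?s n} - ?s ` S"
      have "\<not> dle q i (?s n)"
      proof
        assume "dle q i (?s n)"
        then have "dle q (?s (\<tau> i)) (?s n)" by (simp add: st)
        then have "\<tau> i \<in> S" unfolding S_def using rho_dle[OF q2 bj] by simp
        then have "i \<in> ?s ` S" using st by (metis imageI)
        then show False using i by simp
      qed
      then show "(of_nat (?s n choose i) :: 'a) * a (\<tau> i) * b (\<tau> (?s n - i)) = 0"
        using lucas_zero by simp
    qed
  qed simp
  finally show ?thesis .
qed

lemma aut: "is_dps_alg_aut (rho_dps q \<rho> :: (nat \<Rightarrow> 'a) \<Rightarrow> (nat \<Rightarrow> 'a))"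
proof -
  let ?s = "rho_nat q \<rho>"
  let ?t = "inv (rho_nat q \<rho>)"
  have ts: "?t (?s x) = x" for x by (rule inv_f_f[OF rho_inj[OF q2 bj]])
  have st: "?s (?t x) = x" for x by (rule surj_f_inv_f[OF rho_surj[OF q2 bj]])
  have b: "bij (rho_dps q \<rho> :: (nat \<Rightarrow> 'a) \<Rightarrow> (nat \<Rightarrow> 'a))"
  proof (rule bijI)
    show "inj (rho_dps q \<rho> :: (nat \<Rightarrow> 'a) \<Rightarrow> (nat \<Rightarrow> 'a))"
    proof (rule injI)
      fix x y :: "nat \<Rightarrow> 'a" assume "rho_dps q \<rho> x = rho_dps q \<rho> y"
      then have "x (?t (?s n)) = y (?t (?s n))" for n unfolding rho_dps_def by (rule fun_cong)
      then show "x = y" unfolding ts by (rule ext)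
    qed
    show "surj (rho_dps q \<rho> :: (nat \<Rightarrow> 'a) \<Rightarrow> (nat \<Rightarrow> 'a))"
    proof (rule surjI)
      fix y :: "nat \<Rightarrow> 'a"
      show "rho_dps q \<rho> (\<lambda>n. y (?s n)) = y" unfolding rho_dps_def st ..
    qed
  qed
  have m: "rho_dps q \<rho> (dps_mult x y) = dps_mult (rho_dps q \<rho> x) (rho_dps q \<rho> y)" for x y :: "nat \<Rightarrow> 'a"
  proof
    fix k
    have "rho_dps q \<rho> (dps_mult x y) k = (\<Sum>i\<le>?t k. of_nat (?t k choose i) * x i * y (?t k - i))"
      unfolding rho_dps_def dps_mult_def ..
    also have "\<dots> = (\<Sum>i\<le>?s (?t k). of_nat (?s (?t k) choose i) * x (?t i) * y (?t (?s (?t k) - i)))"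
      by (rule mult_key)
    also have "\<dots> = dps_mult (rho_dps q \<rho> x) (rho_dps q \<rho> y) k"
      unfolding rho_dps_def dps_mult_def st ..
    finally show "rho_dps q \<rho> (dps_mult x y) k = dps_mult (rho_dps q \<rho> x) (rho_dps q \<rho> y) k" .
  qed
  have t0: "?t k = 0 \<longleftrightarrow> k = 0" for k
  proof
    assume "?t k = 0"
    then have "?s (?t k) = ?s 0" by simp
    then show "k = 0" by (simp only: st rho_zero[OF q2 bj])
  next
    assume "k = 0"
    then show "?t k = 0" using ts[of 0] by (simp only: rho_zero[OF q2 bj])
  qed
  have o: "rho_dps q \<rho> dps_one = (dps_one :: nat \<Rightarrow> 'a)"
    unfolding rho_dps_def dps_one_def using t0 by simp
  show ?thesis unfolding is_dps_alg_aut_def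
    using b m o by (simp add: rho_dps_def dps_add_def dps_smult_def)
qed

end

theorem proposition7p8:
  fixes p m0 :: nat and \<rho> :: "nat \<Rightarrow> nat"
  assumes "prime p" and "m0 \<ge> 1"
    and "CHAR('a::comm_ring_1) = p"
    and "bij \<rho>"
  shows "is_dps_alg_aut (rho_dps (p ^ m0) \<rho> :: (nat \<Rightarrow> 'a) \<Rightarrow> (nat \<Rightarrow> 'a))"
proof -
  have p2: "2 \<le> p" using assms(1) by (rule prime_ge_2_nat)
  have "p ^ 1 \<le> p ^ m0" by (rule power_increasing) (use assms(2) p2 in auto)
  then have q2: "2 \<le> p ^ m0" using p2 by simp
  show ?thesis by (rule aut[OF assms(1) assms(3) refl q2 assms(4)])
qed

end
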